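(* Under the standing setup, for every $L\in\mathbb N$, $$\mathrm P\Big[\lim_{n\to\infty}W_n=0\,\Big|\,W_0=L\Big]\le q_W^{\,L},$$ where $(W_n)_n$ is the weakest-first process and $q_W=\mathrm P[\lim_nW_n=0\mid W_0=1]$.
   Context: Standing setup. On a probability space $(\Omega,\mathcal F,\mathrm P)$ there are three mutually independent double arrays $(D_n^k)_{n\ge0,k\ge1}$, $(X_n^k)_{n\ge0,k\ge1}$, $(R_n^k)_{n\ge0,k\ge1}$, each consisting of i.i.d. random variables: $D_n^k\in\{0,1,2,\dots\}$ with law $p_j=\mathrm P[D_n^k=j]$ and mean $m$; $X_n^k\ge0$ real-valued with continuous distribution function $F$ and mean $\mu$; $R_n^k\ge0$ real-valued with mean $r$. Standing assumptions: (A1) $1<m<\infty$, $r<\infty$, $0<\mu<\infty$; (A2) $p_0>0$ and $p_k>0$ for some $k\ge2$; (A3) for the process under consideration started at $1$, every finite positive state is reached with positive probability; (A4) $D_n^k,X_n^k,R_n^k$ have finite variances. Write $D_n(k)=\sum_{j=1}^kD_n^j$, $R_n(k)=\sum_{j=1}^kR_n^j$. For $(x_k)_{k=1}^t$ let $x_{1,t}\le\dots\le x_{t,t}$ be its order statistics. The weakest-first counting function is $N(0,\varnothing,s)=0$ and, for $t\ge1$, $N(t,(x_k)_{k=1}^t,s)=0$ if $x_{1,t}>s$, otherwise $\max\{1\le k\le t:\sum_{j=1}^kx_{j,t}\le s\}$. The weakest-first process (wf-process) started at $L$ is $W_0=L$, $W_{n+1}=N\big(D_n(W_n),(X_n^k)_{k=1}^{D_n(W_n)},R_n(W_n)\big)$.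 *)

theory Defs
  imports "HOL-Probability.Probability"
begin

text \<open>The family (x_k) is given as a function x :: nat => real, of which only
  x 1, ..., x t are used.  ys is the list of order statistics x_{1,t} <= ... <= x_{t,t}.\<close>
definition wf_count :: "nat \<Rightarrow> (nat \<Rightarrow> real) \<Rightarrow> real \<Rightarrow> nat" where
  "wf_count t x s =
     (let ys = sort (map x [1..<t+1]) in
      if t = 0 then 0
      else if ys ! 0 > s then 0
      else Max {k. 1 \<le> k \<and> k \<le> t \<and> sum_list (take k ys) \<le> s})"

definition Dsum :: "(nat \<Rightarrow> nat \<Rightarrow> 'a \<Rightarrow> nat) \<Rightarrow> nat \<Rightarrow> nat \<Rightarrow> 'a \<Rightarrow> nat" where
  "Dsum D n k \<omega> = (\<Sum>j=1..k. D n j \<omega>)"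

definition Rsum :: "(nat \<Rightarrow> nat \<Rightarrow> 'a \<Rightarrow> real) \<Rightarrow> nat \<Rightarrow> nat \<Rightarrow> 'a \<Rightarrow> real" where
  "Rsum R n k \<omega> = (\<Sum>j=1..k. R n j \<omega>)"

primrec wf_proc :: "(nat \<Rightarrow> nat \<Rightarrow> 'a \<Rightarrow> nat) \<Rightarrow> (nat \<Rightarrow> nat \<Rightarrow> 'a \<Rightarrow> real) \<Rightarrow>
    (nat \<Rightarrow> nat \<Rightarrow> 'a \<Rightarrow> real) \<Rightarrow> nat \<Rightarrow> nat \<Rightarrow> 'a \<Rightarrow> nat" where
  "wf_proc D X R L 0 \<omega> = L"
| "wf_proc D X R L (Suc n) \<omega> =
     wf_count (Dsum D n (wf_proc D X R L n \<omega>) \<omega>) (\<lambda>k. X n k \<omega>)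
              (Rsum R n (wf_proc D X R L n \<omega>) \<omega>)"

definition all_vars :: "(nat \<Rightarrow> nat \<Rightarrow> 'a \<Rightarrow> nat) \<Rightarrow> (nat \<Rightarrow> nat \<Rightarrow> 'a \<Rightarrow> real) \<Rightarrow>
    (nat \<Rightarrow> nat \<Rightarrow> 'a \<Rightarrow> real) \<Rightarrow> nat \<times> nat \<times> nat \<Rightarrow> 'a \<Rightarrow> real" where
  "all_vars D X R i \<omega> =
     (case i of (c, n, k) \<Rightarrow> if c = 0 then real (D n k \<omega>) else if c = 1 then X n k \<omega> else R n k \<omega>)"

definition var_index :: "(nat \<times> nat \<times> nat) set" where
  "var_index = {(c, n, k). c \<le> 2 \<and> 1 \<le> k}"

end

theory Submission
  imports Defs
begin



lemma sorted_take_le_mset: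
  fixes ys :: "real list"
  shows "sorted ys \<Longrightarrow> T \<subseteq># mset ys \<Longrightarrow> size T = k \<Longrightarrow> sum_list (take k ys) \<le> sum_mset T"
proof (induction ys arbitrary: T k)
  case Nil
  then show ?case by simp
next
  case (Cons y ys)
  show ?case
  proof (cases k)
    case 0
    then show ?thesis using Cons by simp
  next
    case (Suc k')
    show ?thesis
    proof (cases "y \<in># T")
      case True
      define T' where "T' = T - {#y#}"
      have T: "T = add_mset y T'" using True T'_def by simp
      have "T' \<subseteq># mset ys" using Cons.prems(2) T by simp
      moreover have "size T' = k'" using Cons.prems(3) T Suc by simp
      ultimately have "sum_list (take k' ys) \<le> sum_mset T'" using Cons by simp
      then show ?thesis using T Suc by simp
    next
      case False
      have sub: "T \<subseteq># mset ys" using Cons.prems(2) False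
        by (metis mset.simps(2) Diff_eq_empty_iff_mset minus_add_mset_if_not_in_lhs)
      obtain z where z: "z \<in># T" using Cons.prems(3) Suc by (metis size_eq_Suc_imp_elem)
      define T' where "T' = T - {#z#}"
      have T: "T = add_mset z T'" using z T'_def by simp
      have "T' \<subseteq># mset ys" using sub T by (metis add_mset_remove_trivial diff_subset_eq_self subset_mset.trans)
      moreover have "size T' = k'" using Cons.prems(3) T Suc by simp
      ultimately have "sum_list (take k' ys) \<le> sum_mset T'" using Cons by simp
      moreover have "y \<le> z" proof -
        have "z \<in> set ys" using sub z by (metis mset_subset_eqD set_mset_mset)
        then show ?thesis using Cons.prems(1) by simp
      qed
      ultimately show ?thesis using T Suc by simp
    qed
  qed
qed

lemma mset_realize:
  "finite A \<Longrightarrow> T \<subseteq># image_mset x (mset_set A) \<Longrightarrow> \<exists>S\<subseteq>A. image_mset x (mset_set S) = T"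
proof (induction A arbitrary: T rule: finite_induct)
  case empty
  then show ?case by simp
next
  case (insert a A)
  have im: "image_mset x (mset_set (insert a A)) = add_mset (x a) (image_mset x (mset_set A))"
    using insert by simp
  show ?case
  proof (cases "x a \<in># T")
    case True
    have "T - {#x a#} \<subseteq># image_mset x (mset_set A)"
      using insert.prems im True by (metis insert_DiffM add_mset_remove_trivial insert_subset_eq_iff)
    then obtain S where S: "S \<subseteq> A" "image_mset x (mset_set S) = T - {#x a#}" using insert.IH by blast
    have "finite S" using S insert.hyps finite_subset by blast
    moreover have "a \<notin> S" using S insert.hyps by blast
    ultimately have "image_mset x (mset_set (insert a S)) = T" using S True by simp
    then show ?thesis using S by blast
  next
    case False
    have "T \<subseteq># image_mset x (mset_set A)" using insert.prems im False
      by (metis Diff_eq_empty_iff_mset minus_add_mset_if_not_in_lhs)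
    then show ?thesis using insert.IH by blast
  qed
qed

lemma mset_sort_wf: "mset (sort (map x [1..<t+1])) = image_mset x (mset_set {1..t})"
proof -
  have e: "{1..<t+1} = {1..t}" by auto
  have "mset (sort (map x [1..<t+1])) = image_mset x (mset [1..<t+1])" by simp
  also have "\<dots> = image_mset x (mset_set {1..<t+1})" by (simp only: mset_upt)
  finally show ?thesis by (simp only: e)
qed

lemma sub_image_mset_set:
  assumes "S \<subseteq> {1..(t::nat)}"
  shows "image_mset x (mset_set S) \<subseteq># image_mset x (mset_set {1..t})"
proof -
  have "finite S" using assms finite_subset by blast
  then have "mset_set S \<subseteq># mset_set {1..t}" using assms by (simp add: msubset_mset_set_iff)
  then show ?thesis by (rule image_mset_subseteq_mono)
qed

lemma wf_char:
  fixes x :: "nat \<Rightarrow> real"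
  assumes xnn: "\<And>k. k \<in> {1..t} \<Longrightarrow> 0 \<le> x k" and snn: "0 \<le> s"
  shows "(\<exists>S\<subseteq>{1..t}. card S = wf_count t x s \<and> sum x S \<le> s) \<and>
         (\<forall>S. S \<subseteq> {1..t} \<longrightarrow> sum x S \<le> s \<longrightarrow> card S \<le> wf_count t x s)"
proof -
  define ys where "ys = sort (map x [1..<t+1])"
  have mys: "mset ys = image_mset x (mset_set {1..t})" unfolding ys_def by (rule mset_sort_wf)
  have len: "length ys = t" unfolding ys_def by simp
  have sys: "sorted ys" unfolding ys_def by simp
  have setys: "set ys = x ` {1..t}" using mys by (metis finite_atLeastAtMost finite_set_mset_mset_set set_image_mset set_mset_mset)
  have ysnn: "\<forall>y\<in>set ys. 0 \<le> y" using setys xnn by auto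
  have lower: "sum_list (take (card S) ys) \<le> sum x S" if "S \<subseteq> {1..t}" for S
  proof -
    have fS: "finite S" using that finite_subset by blast
    have "sum_list (take (card S) ys) \<le> sum_mset (image_mset x (mset_set S))"
      using sorted_take_le_mset[OF sys, of "image_mset x (mset_set S)" "card S"] sub_image_mset_set[OF that, of x] mys fS
      by simp
    also have "\<dots> = sum x S" by (simp add: sum_unfold_sum_mset)
    finally show ?thesis .
  qed
  have cardS: "card S \<le> t" if "S \<subseteq> {1..t}" for S
    using card_mono[OF _ that] by simp
  have realize: "\<exists>S\<subseteq>{1..t}. card S = k \<and> sum x S = sum_list (take k ys)" if "k \<le> t" for k
  proof -
    have "mset (take k ys) \<subseteq># mset ys" by (metis append_take_drop_id mset_append mset_subset_eq_add_left)
    then obtain S where S: "S \<subseteq> {1..t}" "image_mset x (mset_set S) = mset (take k ys)"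
      using mset_realize[of "{1..t}" "mset (take k ys)" x] mys by auto
    have fS: "finite S" using S(1) finite_subset by blast
    have "card S = size (image_mset x (mset_set S))" using fS by simp
    also have "\<dots> = k" using S(2) len that by simp
    finally have "card S = k" .
    moreover have "sum x S = sum_list (take k ys)"
      using S(2) by (metis sum_mset_sum_list sum_unfold_sum_mset)
    ultimately show ?thesis using S by blast
  qed
  show ?thesis
  proof (cases "t = 0")
    case True
    then show ?thesis using snn by (simp add: wf_count_def)
  next
    case tpos: False
    then have y0: "ys ! 0 \<in> set ys" using len by simp
    show ?thesis
    proof (cases "ys ! 0 > s")
      case True
      have wc: "wf_count t x s = 0" using tpos True unfolding wf_count_def ys_def[symmetric] by simp
      have "card S = 0" if S: "S \<subseteq> {1..t}" "sum x S \<le> s" for S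
      proof (rule ccontr)
        assume "card S \<noteq> 0"
        then obtain k where k: "card S = Suc k" by (cases "card S") auto
        have "k < length ys" using cardS[OF S(1)] k len by simp
        then have "take (Suc k) ys = ys ! 0 # take k (tl ys)"
          by (cases ys) auto
        moreover have "0 \<le> sum_list (take k (tl ys))"
          using ysnn by (intro sum_list_nonneg) (metis in_set_takeD list.set_sel(2) list.sel(2))
        ultimately have "ys ! 0 \<le> sum_list (take (card S) ys)" using k by simp
        then show False using lower[OF S(1)] S(2) True by simp
      qed
      then show ?thesis using wc snn by auto
    next
      case False
      define K where "K = {k. 1 \<le> k \<and> k \<le> t \<and> sum_list (take k ys) \<le> s}"
      have wc: "wf_count t x s = Max K" using tpos False unfolding wf_count_def ys_def[symmetric] K_def by simp
      have fK: "finite K" unfolding K_def by simp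
      have "take 1 ys = [ys ! 0]" using tpos len by (cases ys) auto
      then have "1 \<in> K" using False tpos unfolding K_def by simp
      then have MK: "Max K \<in> K" using fK by (metis Max_in empty_iff)
      have ex: "\<exists>S\<subseteq>{1..t}. card S = wf_count t x s \<and> sum x S \<le> s"
      proof -
        have "Max K \<le> t" "sum_list (take (Max K) ys) \<le> s" using MK unfolding K_def by auto
        then obtain S where "S\<subseteq>{1..t}" "card S = Max K" "sum x S = sum_list (take (Max K) ys)"
          using realize[of "Max K"] by blast
        then show ?thesis using wc \<open>sum_list (take (Max K) ys) \<le> s\<close> by metis
      qed
      have "card S \<le> wf_count t x s" if S: "S \<subseteq> {1..t}" "sum x S \<le> s" for S
      proof (cases "card S = 0")
        case True then show ?thesis by simp
      next
        case False
        then have "card S \<in> K" using cardS[OF S(1)] lower[OF S(1)] S(2) unfolding K_def by simp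
        then show ?thesis using wc fK by simp
      qed
      then show ?thesis using ex by blast
    qed
  qed
qed




lemma wf_count_cong:
  "(\<And>k. k \<in> {1..t} \<Longrightarrow> x k = y k) \<Longrightarrow> wf_count t x s = wf_count t y s"
proof -
  assume h: "\<And>k. k \<in> {1..t} \<Longrightarrow> x k = y k"
  have e: "map x [1..<t+1] = map y [1..<t+1]" using h by (intro map_cong) auto
  show ?thesis unfolding wf_count_def by (simp only: e)
qed

lemma wf_count_0[simp]: "wf_count 0 x s = 0"
  by (simp add: wf_count_def)

lemma wf_superadd:
  fixes x :: "nat \<Rightarrow> real"
  assumes xnn: "\<And>k. 0 \<le> x k" and s1: "0 \<le> s1" and s2: "0 \<le> s2" and tt: "t1 + t2 \<le> t" and ss: "s1 + s2 \<le> s"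
  shows "wf_count t1 x s1 + wf_count t2 (\<lambda>k. x (k + t1)) s2 \<le> wf_count t x s"
proof -
  obtain S1 where S1: "S1 \<subseteq> {1..t1}" "card S1 = wf_count t1 x s1" "sum x S1 \<le> s1"
    using wf_char[of t1 x s1] xnn s1 by blast
  obtain S2 where S2: "S2 \<subseteq> {1..t2}" "card S2 = wf_count t2 (\<lambda>k. x (k + t1)) s2" "sum (\<lambda>k. x (k + t1)) S2 \<le> s2"
    using wf_char[of t2 "\<lambda>k. x (k + t1)" s2] xnn s2 by blast
  define S2' where "S2' = (\<lambda>k. k + t1) ` S2"
  have inj: "inj_on (\<lambda>k. k + t1) S2" by (auto simp: inj_on_def)
  have cS2': "card S2' = card S2" unfolding S2'_def using inj by (simp add: card_image)
  have sS2': "sum x S2' = sum (\<lambda>k. x (k + t1)) S2" unfolding S2'_def using inj by (simp add: sum.reindex)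
  have S2'sub: "S2' \<subseteq> {t1+1..t1+t2}" using S2(1) unfolding S2'_def by auto
  have a1: "\<And>k. k\<in>S1 \<Longrightarrow> k \<le> t1" using S1(1) by auto
  have a2: "\<And>k. k\<in>S2' \<Longrightarrow> t1 < k" using S2'sub by auto
  have disj: "S1 \<inter> S2' = {}" using a1 a2 by fastforce
  have f1: "finite S1" using S1(1) finite_subset by blast
  have f2: "finite S2'" using S2'sub finite_subset by blast
  have sub: "S1 \<union> S2' \<subseteq> {1..t}" using S1(1) S2'sub tt by auto
  have "sum x (S1 \<union> S2') = sum x S1 + sum x S2'" using disj f1 f2 by (simp add: sum.union_disjoint)
  then have "sum x (S1 \<union> S2') \<le> s" using S1(3) S2(3) sS2' ss by linarith
  then have "card (S1 \<union> S2') \<le> wf_count t x s"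
    using wf_char[of t x s] xnn s1 s2 ss sub by (meson order.trans add_nonneg_nonneg)
  moreover have "card (S1 \<union> S2') = card S1 + card S2'" using disj f1 f2 by (simp add: card_Un_disjoint)
  ultimately show ?thesis using S1(2) S2(2) cS2' by simp
qed

type_synonym stp = "(nat \<Rightarrow> real) \<times> (nat \<Rightarrow> real) \<times> (nat \<Rightarrow> real)"

definition tD :: "nat \<Rightarrow> stp \<Rightarrow> nat" where
  "tD w e = (\<Sum>j<w. nat \<lfloor>fst e j\<rfloor>)"
definition sR :: "nat \<Rightarrow> stp \<Rightarrow> real" where
  "sR w e = (\<Sum>j<w. max 0 (snd (snd e) j))"
definition xX :: "stp \<Rightarrow> nat \<Rightarrow> real" where
  "xX e k = max 0 (fst (snd e) (k - 1))"

definition gstep :: "nat \<Rightarrow> stp \<Rightarrow> nat" where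
  "gstep w e = wf_count (tD w e) (xX e) (sR w e)"

definition shiftE :: "nat \<Rightarrow> stp \<Rightarrow> stp" where
  "shiftE a e = (\<lambda>i. fst e (i + a), \<lambda>i. fst (snd e) (i + tD a e), \<lambda>i. snd (snd e) (i + a))"

lemma sum_lessThan_add: "(\<Sum>j<a+b. f j) = (\<Sum>j<a. f j) + (\<Sum>j<b. f (j + a))" for f :: "nat \<Rightarrow> 'b::comm_monoid_add"
  by (induction b) (simp_all add: ac_simps)

lemma gstep_superadd: "gstep a e + gstep b (shiftE a e) \<le> gstep (a + b) e"
proof -
  have t: "tD (a+b) e = tD a e + tD b (shiftE a e)"
    unfolding tD_def shiftE_def by (simp add: sum_lessThan_add)
  have s: "sR (a+b) e = sR a e + sR b (shiftE a e)"
    unfolding sR_def shiftE_def by (simp add: sum_lessThan_add)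
  have x: "wf_count (tD b (shiftE a e)) (xX (shiftE a e)) (sR b (shiftE a e))
     = wf_count (tD b (shiftE a e)) (\<lambda>k. xX e (k + tD a e)) (sR b (shiftE a e))"
    by (rule wf_count_cong) (auto simp: xX_def shiftE_def Suc_diff_le)
  have "wf_count (tD a e) (xX e) (sR a e) + wf_count (tD b (shiftE a e)) (\<lambda>k. xX e (k + tD a e)) (sR b (shiftE a e))
     \<le> wf_count (tD (a+b) e) (xX e) (sR (a+b) e)"
  proof (rule wf_superadd)
    show "\<And>k. 0 \<le> xX e k" by (simp add: xX_def)
    show "0 \<le> sR a e" "0 \<le> sR b (shiftE a e)" unfolding sR_def by (auto intro!: sum_nonneg)
    show "tD a e + tD b (shiftE a e) \<le> tD (a + b) e" by (simp add: t)
    show "sR a e + sR b (shiftE a e) \<le> sR (a + b) e" by (simp add: s)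
  qed
  then show ?thesis unfolding gstep_def x .
qed

lemma gstep_mono: "a \<le> b \<Longrightarrow> gstep a e \<le> gstep b e"
  using gstep_superadd[of a e "b - a"] by simp

lemma gstep_0[simp]: "gstep 0 e = 0"
  by (simp add: gstep_def tD_def)




abbreviation "SB \<equiv> PiM UNIV (\<lambda>_::nat. borel :: real measure)"
abbreviation "EB \<equiv> SB \<Otimes>\<^sub>M (SB \<Otimes>\<^sub>M SB)"

lemma meas_nat_floor[measurable]: "(\<lambda>x::real. nat \<lfloor>x\<rfloor>) \<in> measurable borel (count_space UNIV)"
proof -
  have "nat \<in> measurable (count_space UNIV) (count_space UNIV)" by simp
  from measurable_compose[OF measurable_real_floor this] show ?thesis .
qed

lemma meas_tD[measurable]: "tD w \<in> measurable EB (count_space UNIV)"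
proof (induction w)
  case 0
  then show ?case by (simp add: tD_def)
next
  case (Suc w)
  have "tD (Suc w) = (\<lambda>e. (\<lambda>i. i + nat \<lfloor>fst e w\<rfloor>) (tD w e) )" by (simp add: tD_def fun_eq_iff)
  also have "\<dots> \<in> measurable EB (count_space UNIV)"
  proof (rule measurable_compose_countable[where f = "\<lambda>i e. i + nat \<lfloor>fst e w\<rfloor>"])
    fix i :: nat
    have "(\<lambda>e::stp. nat \<lfloor>fst e w\<rfloor>) \<in> measurable EB (count_space UNIV)" by measurable
    then show "(\<lambda>e::stp. i + nat \<lfloor>fst e w\<rfloor>) \<in> measurable EB (count_space UNIV)"
      using measurable_compose[of _ EB "count_space UNIV" "\<lambda>n::nat. i + n" "count_space UNIV"] by auto
  qed (rule Suc)
  finally show ?case .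
qed

lemma meas_sR[measurable]: "sR w \<in> borel_measurable EB"
  unfolding sR_def by measurable

lemma meas_xX[measurable]: "(\<lambda>e. xX e k) \<in> borel_measurable EB"
  unfolding xX_def by measurable

lemma meas_wf_fixed: "(\<lambda>e. wf_count t (xX e) (sR w e)) \<in> measurable EB (count_space UNIV)"
proof -
  have eq: "(\<lambda>e. wf_count t (xX e) (sR w e)) -` {n} \<inter> space EB =
    {e \<in> space EB. (\<exists>S\<in>Pow {1..t}. card S = n \<and> (\<Sum>k\<in>S. xX e k) \<le> sR w e) \<and>
                    (\<forall>S\<in>Pow {1..t}. (\<Sum>k\<in>S. xX e k) \<le> sR w e \<longrightarrow> card S \<le> n)}" for n
  proof -
    have iff: "wf_count t (xX e) (sR w e) = n \<longleftrightarrow>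
      ((\<exists>S\<in>Pow {1..t}. card S = n \<and> (\<Sum>k\<in>S. xX e k) \<le> sR w e) \<and>
                    (\<forall>S\<in>Pow {1..t}. (\<Sum>k\<in>S. xX e k) \<le> sR w e \<longrightarrow> card S \<le> n))" for e
    proof -
      have c: "(\<exists>S\<subseteq>{1..t}. card S = wf_count t (xX e) (sR w e) \<and> sum (xX e) S \<le> sR w e) \<and>
         (\<forall>S. S \<subseteq> {1..t} \<longrightarrow> sum (xX e) S \<le> sR w e \<longrightarrow> card S \<le> wf_count t (xX e) (sR w e))"
        by (rule wf_char) (auto simp: xX_def sR_def intro!: sum_nonneg)
      obtain S0 where S0: "S0\<subseteq>{1..t}" "card S0 = wf_count t (xX e) (sR w e)" "sum (xX e) S0 \<le> sR w e"
        using c by blast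
      have up: "\<And>S. S \<subseteq> {1..t} \<Longrightarrow> sum (xX e) S \<le> sR w e \<Longrightarrow> card S \<le> wf_count t (xX e) (sR w e)"
        using c by blast
      show ?thesis
      proof
        assume "wf_count t (xX e) (sR w e) = n"
        then show "(\<exists>S\<in>Pow {1..t}. card S = n \<and> (\<Sum>k\<in>S. xX e k) \<le> sR w e) \<and>
                    (\<forall>S\<in>Pow {1..t}. (\<Sum>k\<in>S. xX e k) \<le> sR w e \<longrightarrow> card S \<le> n)"
          using S0 up by auto
      next
        assume h: "(\<exists>S\<in>Pow {1..t}. card S = n \<and> (\<Sum>k\<in>S. xX e k) \<le> sR w e) \<and>
                    (\<forall>S\<in>Pow {1..t}. (\<Sum>k\<in>S. xX e k) \<le> sR w e \<longrightarrow> card S \<le> n)"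
        then obtain Sa where "Sa \<subseteq> {1..t}" "card Sa = n" "sum (xX e) Sa \<le> sR w e" by auto
        then have "n \<le> wf_count t (xX e) (sR w e)" using up by metis
        moreover have "wf_count t (xX e) (sR w e) \<le> n" using h S0 by auto
        ultimately show "wf_count t (xX e) (sR w e) = n" by simp
      qed
    qed
    show ?thesis using iff by blast
  qed
  have "{e \<in> space EB. (\<exists>S\<in>Pow {1..t}. card S = n \<and> (\<Sum>k\<in>S. xX e k) \<le> sR w e) \<and>
                    (\<forall>S\<in>Pow {1..t}. (\<Sum>k\<in>S. xX e k) \<le> sR w e \<longrightarrow> card S \<le> n)} \<in> sets EB" for n
    by measurable
  then show ?thesis
    by (subst measurable_count_space_eq2_countable) (auto simp: eq)
qed

lemma meas_gstep[measurable]: "gstep w \<in> measurable EB (count_space UNIV)"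
proof -
  have "gstep w = (\<lambda>e. (\<lambda>t e. wf_count t (xX e) (sR w e)) (tD w e) e)" by (simp add: gstep_def fun_eq_iff)
  also have "\<dots> \<in> measurable EB (count_space UNIV)"
    by (rule measurable_compose_countable[OF meas_wf_fixed meas_tD])
  finally show ?thesis .
qed




lemma seq_space_interp: "prob_space \<nu> \<Longrightarrow> sequence_space \<nu>"
  unfolding sequence_space_def product_prob_space_def product_prob_space_axioms_def product_sigma_finite_def
  by (auto intro: prob_space_imp_sigma_finite)

lemma seq_split:
  fixes F G :: "(nat \<Rightarrow> 'a) \<Rightarrow> ennreal"
  assumes nu: "prob_space \<nu>"
    and F: "F \<in> borel_measurable (PiM UNIV (\<lambda>_::nat. \<nu>))"
    and Fdep: "\<And>\<omega> \<omega>'. (\<And>i. i < m \<Longrightarrow> \<omega> i = \<omega>' i) \<Longrightarrow> F \<omega> = F \<omega>'"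
    and G: "G \<in> borel_measurable (PiM UNIV (\<lambda>_::nat. \<nu>))"
  shows "(\<integral>\<^sup>+\<omega>. F \<omega> * G (\<lambda>i. \<omega> (i + m)) \<partial>PiM UNIV (\<lambda>_. \<nu>))
       = (\<integral>\<^sup>+\<omega>. F \<omega> \<partial>PiM UNIV (\<lambda>_. \<nu>)) * (\<integral>\<^sup>+\<omega>. G \<omega> \<partial>PiM UNIV (\<lambda>_. \<nu>))"
proof -
  interpret S: sequence_space \<nu> using nu by (rule seq_space_interp)
  let ?S = "PiM UNIV (\<lambda>_::nat. \<nu>)"
  let ?H = "\<lambda>\<omega>. F \<omega> * G (\<lambda>i. \<omega> (i + m))"
  have Hm: "?H \<in> borel_measurable ?S"
  proof -
    have "(\<lambda>\<omega>::nat\<Rightarrow>'a. \<lambda>i. \<omega> (i + m)) \<in> measurable ?S ?S"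
      by (rule measurable_PiM_single') (auto simp: space_PiM)
    then show ?thesis using F G by measurable
  qed
  have "(\<integral>\<^sup>+\<omega>. ?H \<omega> \<partial>?S) = (\<integral>\<^sup>+\<omega>. ?H \<omega> \<partial>distr (?S \<Otimes>\<^sub>M ?S) ?S (\<lambda>(\<omega>, \<omega>'). comb_seq m \<omega> \<omega>'))"
    by (simp add: S.PiM_comb_seq)
  also have "\<dots> = (\<integral>\<^sup>+p. ?H (comb_seq m (fst p) (snd p)) \<partial>(?S \<Otimes>\<^sub>M ?S))"
    by (subst nn_integral_distr[OF measurable_comb_seq]) (simp_all add: Hm case_prod_beta)
  also have "\<dots> = (\<integral>\<^sup>+p. F (fst p) * G (snd p) \<partial>(?S \<Otimes>\<^sub>M ?S))"
  proof (rule nn_integral_cong)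
    fix p :: "(nat \<Rightarrow> 'a) \<times> (nat \<Rightarrow> 'a)"
    have "F (comb_seq m (fst p) (snd p)) = F (fst p)"
      by (rule Fdep) (simp add: comb_seq_less)
    moreover have "(\<lambda>i. comb_seq m (fst p) (snd p) (i + m)) = snd p"
      by (simp add: comb_seq_add fun_eq_iff)
    ultimately show "?H (comb_seq m (fst p) (snd p)) = F (fst p) * G (snd p)" by simp
  qed
  also have "\<dots> = (\<integral>\<^sup>+x. \<integral>\<^sup>+y. F x * G y \<partial>?S \<partial>?S)"
    apply (subst S.P.nn_integral_fst[symmetric])
    subgoal using F G by measurable
    apply simp done
  also have "\<dots> = (\<integral>\<^sup>+x. F x * (\<integral>\<^sup>+y. G y \<partial>?S) \<partial>?S)"
    by (rule nn_integral_cong) (simp add: nn_integral_cmult G)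
  also have "\<dots> = (\<integral>\<^sup>+\<omega>. F \<omega> \<partial>?S) * (\<integral>\<^sup>+\<omega>. G \<omega> \<partial>?S)"
    by (simp add: nn_integral_multc F)
  finally show ?thesis .
qed

lemma seq_iter:
  fixes H :: "(nat \<Rightarrow> 'a) \<Rightarrow> ennreal"
  assumes nu: "prob_space \<nu>" and H: "H \<in> borel_measurable (PiM UNIV (\<lambda>_::nat. \<nu>))"
  shows "(\<integral>\<^sup>+\<omega>. H \<omega> \<partial>PiM UNIV (\<lambda>_. \<nu>)) = (\<integral>\<^sup>+e. \<integral>\<^sup>+\<omega>. H (case_nat e \<omega>) \<partial>PiM UNIV (\<lambda>_. \<nu>) \<partial>\<nu>)"
proof -
  interpret S: sequence_space \<nu> using nu by (rule seq_space_interp)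
  let ?S = "PiM UNIV (\<lambda>_::nat. \<nu>)"
  have mi: "(\<lambda>(s, \<omega>). case_nat s \<omega>) \<in> measurable (\<nu> \<Otimes>\<^sub>M ?S) ?S" by measurable
  have "(\<integral>\<^sup>+\<omega>. H \<omega> \<partial>?S) = (\<integral>\<^sup>+\<omega>. H \<omega> \<partial>distr (\<nu> \<Otimes>\<^sub>M ?S) ?S (\<lambda>(s, \<omega>). case_nat s \<omega>))"
    by (simp add: S.PiM_iter)
  also have "\<dots> = (\<integral>\<^sup>+p. H (case_nat (fst p) (snd p)) \<partial>(\<nu> \<Otimes>\<^sub>M ?S))"
    by (subst nn_integral_distr[OF mi]) (simp_all add: H case_prod_beta)
  also have "\<dots> = (\<integral>\<^sup>+e. \<integral>\<^sup>+\<omega>. H (case_nat e \<omega>) \<partial>?S \<partial>\<nu>)"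
    apply (subst S.P.nn_integral_fst[symmetric])
    subgoal using measurable_compose[OF mi H] by (simp add: case_prod_beta)
    apply simp done
  finally show ?thesis .
qed




definition sh :: "nat \<Rightarrow> (nat \<Rightarrow> real) \<Rightarrow> (nat \<Rightarrow> real)" where
  "sh k f = (\<lambda>i. f (i + k))"

lemma meas_sh[measurable]: "sh k \<in> measurable (PiM UNIV (\<lambda>_::nat. N)) (PiM UNIV (\<lambda>_::nat. N))"
  unfolding sh_def by (rule measurable_PiM_single') (auto simp: space_PiM)

lemma shiftE_eq: "shiftE a (d, x, r) = (sh a d, sh (tD a (d, x, r)) x, sh a r)"
  by (simp add: shiftE_def sh_def fun_eq_iff)

lemma tD_fst: "tD a (d, x, r) = tD a (d, x', r')"
  by (simp add: tD_def)

lemma meas_shiftE[measurable]: "shiftE a \<in> measurable EB EB"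
proof -
  have "shiftE a = (\<lambda>e. (\<lambda>t e. (sh a (fst e), sh t (fst (snd e)), sh a (snd (snd e)))) (tD a e) e)"
    by (simp add: shiftE_def sh_def fun_eq_iff)
  also have "\<dots> \<in> measurable EB EB"
    by (rule measurable_compose_countable[OF _ meas_tD]) measurable
  finally show ?thesis .
qed

lemma gstep_local:
  assumes "\<And>i. i < a \<Longrightarrow> d i = d' i" "\<And>i. i < tD a (d, x, r) \<Longrightarrow> x i = x' i" "\<And>i. i < a \<Longrightarrow> r i = r' i"
  shows "gstep a (d, x, r) = gstep a (d', x', r')"
proof -
  have t: "tD a (d, x, r) = tD a (d', x', r')" unfolding tD_def using assms(1) by (auto intro: sum.cong)
  have s: "sR a (d, x, r) = sR a (d', x', r')" unfolding sR_def using assms(3) by (auto intro: sum.cong)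
  have "wf_count (tD a (d, x, r)) (xX (d, x, r)) (sR a (d, x, r)) = wf_count (tD a (d, x, r)) (xX (d', x', r')) (sR a (d, x, r))"
    by (rule wf_count_cong) (auto simp: xX_def assms(2))
  then show ?thesis unfolding gstep_def t s by simp
qed

locale canon =
  fixes \<nu>D \<nu>X \<nu>R :: "real measure"
  assumes pD: "prob_space \<nu>D" and pX: "prob_space \<nu>X" and pR: "prob_space \<nu>R"
    and sD: "sets \<nu>D = sets borel" and sX: "sets \<nu>X = sets borel" and sR: "sets \<nu>R = sets borel"
begin

abbreviation "SD \<equiv> PiM UNIV (\<lambda>_::nat. \<nu>D)"
abbreviation "SX \<equiv> PiM UNIV (\<lambda>_::nat. \<nu>X)"
abbreviation "SR \<equiv> PiM UNIV (\<lambda>_::nat. \<nu>R)"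
abbreviation "Q \<equiv> SD \<Otimes>\<^sub>M (SX \<Otimes>\<^sub>M SR)"

lemma sets_SD: "sets SD = sets SB" by (rule sets_PiM_cong) (auto simp: sD)
lemma sets_SX: "sets SX = sets SB" by (rule sets_PiM_cong) (auto simp: sX)
lemma sets_SR: "sets SR = sets SB" by (rule sets_PiM_cong) (auto simp: sR)
lemma sets_Q: "sets Q = sets EB"
  by (intro sets_pair_measure_cong sets_SD sets_SX sets_SR)

lemma space_SD[simp]: "space SD = UNIV" by (simp add: space_PiM sets_eq_imp_space_eq[OF sD])
lemma space_SX[simp]: "space SX = UNIV" by (simp add: space_PiM sets_eq_imp_space_eq[OF sX])
lemma space_SR[simp]: "space SR = UNIV" by (simp add: space_PiM sets_eq_imp_space_eq[OF sR])

lemma prob_SD: "prob_space SD" by (rule prob_space_PiM) (simp add: pD)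
lemma prob_SX: "prob_space SX" by (rule prob_space_PiM) (simp add: pX)
lemma prob_SR: "prob_space SR" by (rule prob_space_PiM) (simp add: pR)
lemma prob_SXR: "prob_space (SX \<Otimes>\<^sub>M SR)"
  by (intro prob_space_pair prob_SX prob_SR)
lemma prob_Q: "prob_space Q"
  by (intro prob_space_pair prob_SD prob_SXR)

lemma meas_gstepQ[measurable]: "gstep w \<in> measurable Q (count_space UNIV)"
  using meas_gstep by (simp add: measurable_cong_sets[OF sets_Q refl])

lemma meas_shiftEQ[measurable]: "shiftE a \<in> measurable Q Q"
  using meas_shiftE by (simp add: measurable_cong_sets[OF sets_Q sets_Q])

lemma iter3:
  assumes h: "h \<in> borel_measurable Q"
  shows "(\<integral>\<^sup>+e. h e \<partial>Q) = (\<integral>\<^sup>+d. \<integral>\<^sup>+x. \<integral>\<^sup>+r. h (d, x, r) \<partial>SR \<partial>SX \<partial>SD)"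
proof -
  interpret XR: prob_space "SX \<Otimes>\<^sub>M SR" by (rule prob_SXR)
  interpret R: prob_space SR by (rule prob_SR)
  have "(\<integral>\<^sup>+e. h e \<partial>Q) = (\<integral>\<^sup>+d. \<integral>\<^sup>+p. h (d, p) \<partial>(SX \<Otimes>\<^sub>M SR) \<partial>SD)"
    by (rule XR.nn_integral_fst[symmetric, OF h])
  also have "\<dots> = (\<integral>\<^sup>+d. \<integral>\<^sup>+x. \<integral>\<^sup>+r. h (d, x, r) \<partial>SR \<partial>SX \<partial>SD)"
  proof (rule nn_integral_cong)
    fix d :: "nat \<Rightarrow> real"
    have "(\<lambda>p. h (d, p)) \<in> borel_measurable (SX \<Otimes>\<^sub>M SR)" using h by measurable
    then show "(\<integral>\<^sup>+p. h (d, p) \<partial>(SX \<Otimes>\<^sub>M SR)) = (\<integral>\<^sup>+x. \<integral>\<^sup>+r. h (d, x, r) \<partial>SR \<partial>SX)"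
      by (rule R.nn_integral_fst[symmetric])
  qed
  finally show ?thesis .
qed

end



context canon begin

lemma K:
  fixes \<phi> \<psi> :: "nat \<Rightarrow> ennreal"
  shows "(\<integral>\<^sup>+e. \<phi> (gstep a e) * \<psi> (gstep b (shiftE a e)) \<partial>Q)
       = (\<integral>\<^sup>+e. \<phi> (gstep a e) \<partial>Q) * (\<integral>\<^sup>+e. \<psi> (gstep b e) \<partial>Q)"
proof -
  interpret R: prob_space SR by (rule prob_SR)
  interpret X: prob_space SX by (rule prob_SX)
  have mphi[measurable]: "\<phi> \<in> borel_measurable (count_space UNIV)" by simp
  have mpsi[measurable]: "\<psi> \<in> borel_measurable (count_space UNIV)" by simp
  define A where "A = (\<lambda>e. \<phi> (gstep a e))"
  define B where "B = (\<lambda>e. \<psi> (gstep b e))"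
  have mA[measurable]: "A \<in> borel_measurable Q" unfolding A_def by measurable
  have mB[measurable]: "B \<in> borel_measurable Q" unfolding B_def by measurable
  define mm where "mm = (\<lambda>d::nat\<Rightarrow>real. \<Sum>j<a. nat \<lfloor>d j\<rfloor>)"
  let ?m = "mm"
  have tDm: "tD a (d, x, r) = ?m d" for d x r by (simp add: tD_def mm_def)
  have Aloc: "A (d, x, r) = A (d', x', r')"
    if "\<And>i. i < a \<Longrightarrow> d i = d' i" "\<And>i. i < ?m d \<Longrightarrow> x i = x' i" "\<And>i. i < a \<Longrightarrow> r i = r' i" for d d' x x' r r'
    unfolding A_def using that by (intro arg_cong[where f=\<phi>] gstep_local) (auto simp: tDm)
  have "(\<integral>\<^sup>+e. \<phi> (gstep a e) * \<psi> (gstep b (shiftE a e)) \<partial>Q) = (\<integral>\<^sup>+e. A e * B (shiftE a e) \<partial>Q)"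
    by (simp add: A_def B_def)
  also have "\<dots> = (\<integral>\<^sup>+d. \<integral>\<^sup>+x. \<integral>\<^sup>+r. A (d, x, r) * B (sh a d, sh (?m d) x, sh a r) \<partial>SR \<partial>SX \<partial>SD)"
    by (subst iter3) (simp_all add: shiftE_eq tDm)
  also have "\<dots> = (\<integral>\<^sup>+d. \<integral>\<^sup>+x. (\<integral>\<^sup>+r. A (d, x, r) \<partial>SR) * (\<integral>\<^sup>+r. B (sh a d, sh (?m d) x, r) \<partial>SR) \<partial>SX \<partial>SD)"
  proof (intro nn_integral_cong)
    fix d x
    show "(\<integral>\<^sup>+r. A (d, x, r) * B (sh a d, sh (?m d) x, sh a r) \<partial>SR) =
        (\<integral>\<^sup>+r. A (d, x, r) \<partial>SR) * (\<integral>\<^sup>+r. B (sh a d, sh (?m d) x, r) \<partial>SR)"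
    proof -
      have "(\<integral>\<^sup>+r. A (d, x, r) * (\<lambda>r'. B (sh a d, sh (?m d) x, r')) (\<lambda>i. r (i + a)) \<partial>SR) =
        (\<integral>\<^sup>+r. A (d, x, r) \<partial>SR) * (\<integral>\<^sup>+r. (\<lambda>r'. B (sh a d, sh (?m d) x, r')) r \<partial>SR)"
        by (rule seq_split[OF pR, where F = "\<lambda>r. A (d, x, r)" and m = a]) (measurable, rule Aloc, auto, measurable)
      then show ?thesis by (simp add: sh_def)
    qed
  qed
  also have "\<dots> = (\<integral>\<^sup>+d. (\<integral>\<^sup>+x. \<integral>\<^sup>+r. A (d, x, r) \<partial>SR \<partial>SX) * (\<integral>\<^sup>+x. \<integral>\<^sup>+r. B (sh a d, x, r) \<partial>SR \<partial>SX) \<partial>SD)"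
  proof (intro nn_integral_cong)
    fix d
    show "(\<integral>\<^sup>+x. (\<integral>\<^sup>+r. A (d, x, r) \<partial>SR) * (\<integral>\<^sup>+r. B (sh a d, sh (?m d) x, r) \<partial>SR) \<partial>SX) =
        (\<integral>\<^sup>+x. \<integral>\<^sup>+r. A (d, x, r) \<partial>SR \<partial>SX) * (\<integral>\<^sup>+x. \<integral>\<^sup>+r. B (sh a d, x, r) \<partial>SR \<partial>SX)"
    proof -
      have "(\<integral>\<^sup>+x. (\<integral>\<^sup>+r. A (d, x, r) \<partial>SR) * (\<lambda>x'. \<integral>\<^sup>+r. B (sh a d, x', r) \<partial>SR) (\<lambda>i. x (i + ?m d)) \<partial>SX) =
        (\<integral>\<^sup>+x. \<integral>\<^sup>+r. A (d, x, r) \<partial>SR \<partial>SX) * (\<integral>\<^sup>+x. (\<lambda>x'. \<integral>\<^sup>+r. B (sh a d, x', r) \<partial>SR) x \<partial>SX)"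
        apply (rule seq_split[OF pX, where F = "\<lambda>x. \<integral>\<^sup>+r. A (d, x, r) \<partial>SR" and m = "?m d"])
          apply measurable
         apply (intro nn_integral_cong Aloc)
           apply auto[3]
        apply measurable
        done
      then show ?thesis by (simp add: sh_def)
    qed
  qed
  also have "\<dots> = (\<integral>\<^sup>+d. \<integral>\<^sup>+x. \<integral>\<^sup>+r. A (d, x, r) \<partial>SR \<partial>SX \<partial>SD) * (\<integral>\<^sup>+d. \<integral>\<^sup>+x. \<integral>\<^sup>+r. B (d, x, r) \<partial>SR \<partial>SX \<partial>SD)"
  proof -
    have "(\<integral>\<^sup>+d. (\<integral>\<^sup>+x. \<integral>\<^sup>+r. A (d, x, r) \<partial>SR \<partial>SX) * (\<lambda>d'. \<integral>\<^sup>+x. \<integral>\<^sup>+r. B (d', x, r) \<partial>SR \<partial>SX) (\<lambda>i. d (i + a)) \<partial>SD) =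
      (\<integral>\<^sup>+d. \<integral>\<^sup>+x. \<integral>\<^sup>+r. A (d, x, r) \<partial>SR \<partial>SX \<partial>SD) * (\<integral>\<^sup>+d. (\<lambda>d'. \<integral>\<^sup>+x. \<integral>\<^sup>+r. B (d', x, r) \<partial>SR \<partial>SX) d \<partial>SD)"
      apply (rule seq_split[OF pD, where F = "\<lambda>d. \<integral>\<^sup>+x. \<integral>\<^sup>+r. A (d, x, r) \<partial>SR \<partial>SX" and m = a])
        apply measurable
      subgoal for d d'
      proof -
        assume h: "\<And>i. i < a \<Longrightarrow> d i = d' i"
        have "?m d = ?m d'" unfolding mm_def using h by (auto intro: sum.cong)
        then show ?thesis using h by (intro nn_integral_cong Aloc) auto
      qed
      apply measurable
      done
    then show ?thesis by (simp add: sh_def)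
  qed
  also have "\<dots> = (\<integral>\<^sup>+e. \<phi> (gstep a e) \<partial>Q) * (\<integral>\<^sup>+e. \<psi> (gstep b e) \<partial>Q)"
    by (simp add: iter3 A_def[symmetric] B_def[symmetric])
  finally show ?thesis .
qed

end



primrec cwf :: "nat \<Rightarrow> nat \<Rightarrow> (nat \<Rightarrow> stp) \<Rightarrow> nat" where
  "cwf L 0 \<omega> = L"
| "cwf L (Suc n) \<omega> = gstep (cwf L n \<omega>) (\<omega> n)"

lemma cwf_shift: "cwf L (Suc n) \<omega> = cwf (gstep L (\<omega> 0)) n (\<lambda>i. \<omega> (Suc i))"
  by (induction n) auto

lemma cwf_mono: "L \<le> L' \<Longrightarrow> cwf L n \<omega> \<le> cwf L' n \<omega>"
  by (induction n) (auto intro: gstep_mono)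

lemma cwf_zero_absorb: "cwf L n \<omega> = 0 \<Longrightarrow> n \<le> m \<Longrightarrow> cwf L m \<omega> = 0"
proof (induction m)
  case 0 then show ?case by simp
next
  case (Suc m)
  then show ?case by (cases "n = Suc m") auto
qed

context canon begin

abbreviation "P \<equiv> PiM UNIV (\<lambda>_::nat. Q)"

lemma space_Q[simp]: "space Q = UNIV" by (simp add: space_pair_measure)
lemma space_P[simp]: "space P = UNIV" by (simp add: space_PiM)

lemma meas_cwf[measurable]: "cwf L n \<in> measurable P (count_space UNIV)"
proof (induction n)
  case 0 then show ?case by simp
next
  case (Suc n)
  have "cwf L (Suc n) = (\<lambda>\<omega>. (\<lambda>w \<omega>. gstep w (\<omega> n)) (cwf L n \<omega>) \<omega>)" by (simp add: fun_eq_iff)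
  also have "\<dots> \<in> measurable P (count_space UNIV)"
    by (rule measurable_compose_countable[OF _ Suc]) measurable
  finally show ?case .
qed

definition fe :: "nat \<Rightarrow> nat \<Rightarrow> ennreal" where
  "fe n L = emeasure P {\<omega> \<in> space P. cwf L n \<omega> = 0}"

lemma sets_fe[measurable]: "{\<omega> \<in> space P. cwf L n \<omega> = 0} \<in> sets P" by measurable
lemma sets_fe2[measurable, simp]: "{\<omega>. cwf L n \<omega> = 0} \<in> sets P" using sets_fe by simp

lemma fe_le1: "fe n L \<le> 1"
proof -
  interpret PP: prob_space P by (intro prob_space_PiM prob_Q)
  show ?thesis unfolding fe_def by (rule PP.emeasure_le_1)
qed

lemma fe_0: "fe 0 L = (if L = 0 then 1 else 0)"
proof -
  interpret PP: prob_space P by (intro prob_space_PiM prob_Q)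
  show ?thesis unfolding fe_def using PP.emeasure_space_1 by auto
qed

lemma fe_anti: "L \<le> L' \<Longrightarrow> fe n L' \<le> fe n L"
  unfolding fe_def
proof (rule emeasure_mono)
  assume "L \<le> L'"
  then show "{\<omega> \<in> space P. cwf L' n \<omega> = 0} \<subseteq> {\<omega> \<in> space P. cwf L n \<omega> = 0}"
  proof (intro subsetI)
    fix \<omega> assume "\<omega> \<in> {\<omega> \<in> space P. cwf L' n \<omega> = 0}"
    then have "cwf L n \<omega> \<le> 0" using cwf_mono[OF \<open>L \<le> L'\<close>, of n \<omega>] by simp
    then show "\<omega> \<in> {\<omega> \<in> space P. cwf L n \<omega> = 0}" by simp
  qed
qed simp

lemma fe_Suc: "fe (Suc n) L = (\<integral>\<^sup>+e. fe n (gstep L e) \<partial>Q)"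
proof -
  let ?S = "{\<omega> \<in> space P. cwf L (Suc n) \<omega> = 0}"
  have "fe (Suc n) L = (\<integral>\<^sup>+\<omega>. indicator ?S \<omega> \<partial>P)" unfolding fe_def
    by (subst nn_integral_indicator) (simp_all del: cwf.simps)
  also have "\<dots> = (\<integral>\<^sup>+e. \<integral>\<^sup>+\<omega>. indicator ?S (case_nat e \<omega>) \<partial>P \<partial>Q)"
    by (rule seq_iter[OF prob_Q]) measurable
  also have "\<dots> = (\<integral>\<^sup>+e. \<integral>\<^sup>+\<omega>. indicator {\<omega> \<in> space P. cwf (gstep L e) n \<omega> = 0} \<omega> \<partial>P \<partial>Q)"
  proof (intro nn_integral_cong)
    fix e \<omega>
    have "cwf L (Suc n) (case_nat e \<omega>) = cwf (gstep L e) n \<omega>"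
      by (simp only: cwf_shift) simp
    then show "indicator ?S (case_nat e \<omega>) = indicator {\<omega> \<in> space P. cwf (gstep L e) n \<omega> = 0} \<omega>"
      by (simp add: indicator_def)
  qed
  also have "\<dots> = (\<integral>\<^sup>+e. fe n (gstep L e) \<partial>Q)"
    unfolding fe_def by (subst nn_integral_indicator) simp_all
  finally show ?thesis .
qed

lemma fe_submult: "fe n (a + b) \<le> fe n a * fe n b"
proof (induction n arbitrary: a b)
  case 0
  then show ?case by (simp add: fe_0)
next
  case (Suc n)
  have "fe (Suc n) (a + b) = (\<integral>\<^sup>+e. fe n (gstep (a + b) e) \<partial>Q)" by (rule fe_Suc)
  also have "\<dots> \<le> (\<integral>\<^sup>+e. fe n (gstep a e + gstep b (shiftE a e)) \<partial>Q)"
    by (intro nn_integral_mono fe_anti gstep_superadd)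
  also have "\<dots> \<le> (\<integral>\<^sup>+e. fe n (gstep a e) * fe n (gstep b (shiftE a e)) \<partial>Q)"
    by (intro nn_integral_mono Suc.IH)
  also have "\<dots> = (\<integral>\<^sup>+e. fe n (gstep a e) \<partial>Q) * (\<integral>\<^sup>+e. fe n (gstep b e) \<partial>Q)"
    by (rule K)
  also have "\<dots> = fe (Suc n) a * fe (Suc n) b" by (simp add: fe_Suc)
  finally show ?case .
qed

lemma fe_pow: "fe n L \<le> fe n 1 ^ L"
proof (induction L)
  case 0 then show ?case by (simp add: fe_le1)
next
  case (Suc L)
  have "fe n (Suc L) = fe n (1 + L)" by simp
  also have "\<dots> \<le> fe n 1 * fe n L" by (rule fe_submult)
  also have "\<dots> \<le> fe n 1 * fe n 1 ^ L" by (intro mult_left_mono Suc.IH) simp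
  finally show ?case by simp
qed

definition Ext :: "nat \<Rightarrow> (nat \<Rightarrow> stp) set" where
  "Ext L = {\<omega> \<in> space P. \<exists>n. cwf L n \<omega> = 0}"

lemma Ext_SUP: "emeasure P (Ext L) = (SUP n. fe n L)"
proof -
  have "Ext L = (\<Union>n. {\<omega> \<in> space P. cwf L n \<omega> = 0})" unfolding Ext_def by auto
  moreover have "(SUP n. emeasure P {\<omega> \<in> space P. cwf L n \<omega> = 0}) = emeasure P (\<Union>n. {\<omega> \<in> space P. cwf L n \<omega> = 0})"
    by (rule SUP_emeasure_incseq) (auto simp: incseq_def intro: cwf_zero_absorb)
  ultimately show ?thesis unfolding fe_def by simp
qed

lemma Ext_bound: "emeasure P (Ext L) \<le> emeasure P (Ext 1) ^ L"
proof -
  have "emeasure P (Ext L) = (SUP n. fe n L)" by (rule Ext_SUP)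
  also have "\<dots> \<le> emeasure P (Ext 1) ^ L"
  proof (rule SUP_least)
    fix n
    have "fe n 1 \<le> emeasure P (Ext 1)" unfolding Ext_SUP by (rule SUP_upper) simp
    then have "fe n 1 ^ L \<le> emeasure P (Ext 1) ^ L" by (rule power_mono) simp
    then show "fe n L \<le> emeasure P (Ext 1) ^ L" using fe_pow order_trans by blast
  qed
  finally show ?thesis .
qed

end



lemma seq_law:
  fixes Y :: "'i \<Rightarrow> 'a \<Rightarrow> real"
  assumes ps: "prob_space M" and ind: "prob_space.indep_vars M (\<lambda>_. borel) Y I"
    and inj: "inj \<phi>" and sub: "range \<phi> \<subseteq> I"
    and law: "\<And>k. distr M borel (Y (\<phi> k)) = \<nu>"
  shows "distr M SB (\<lambda>\<omega> k. Y (\<phi> k) \<omega>) = PiM UNIV (\<lambda>_::nat. \<nu>)"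
proof -
  interpret prob_space M by (rule ps)
  have rv: "\<And>i. i \<in> I \<Longrightarrow> random_variable borel (Y i)" using ind by (auto simp: indep_vars_def)
  have i1: "indep_vars (\<lambda>k. PiM {\<phi> k} (\<lambda>_. borel)) (\<lambda>k \<omega>. restrict (\<lambda>i. Y i \<omega>) {\<phi> k}) UNIV"
  proof (rule indep_vars_restrict[OF ind])
    show "\<And>j. j \<in> UNIV \<Longrightarrow> {\<phi> j} \<subseteq> I" using sub by blast
    show "disjoint_family_on (\<lambda>k. {\<phi> k}) UNIV"
      unfolding disjoint_family_on_def using inj by (simp add: inj_eq)
  qed
  have i2: "indep_vars (\<lambda>_. borel) (\<lambda>k \<omega>. (\<lambda>y. y (\<phi> k)) (restrict (\<lambda>i. Y i \<omega>) {\<phi> k})) UNIV"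
    by (rule indep_vars_compose2[OF i1]) (rule measurable_component_singleton, simp)
  have i3: "indep_vars (\<lambda>_. borel) (\<lambda>k. Y (\<phi> k)) UNIV"
    using i2 by simp
  have rv3: "\<And>k. random_variable borel (Y (\<phi> k))" using rv sub by auto
  have "distr M (PiM UNIV (\<lambda>_::nat. borel)) (\<lambda>x. \<lambda>k\<in>UNIV. Y (\<phi> k) x) = (PiM UNIV (\<lambda>k. distr M borel (Y (\<phi> k))))"
    using indep_vars_iff_distr_eq_PiM'[where I=UNIV and M'="\<lambda>_. borel" and X="\<lambda>k. Y (\<phi> k)"] i3 rv3 by simp
  then show ?thesis by (simp add: law restrict_UNIV)
qed




lemma nat_tendsto0_iff:
  fixes f :: "nat \<Rightarrow> nat"
  assumes absorb: "\<And>n. f n = 0 \<Longrightarrow> f (Suc n) = 0"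
  shows "f \<longlonglongrightarrow> 0 \<longleftrightarrow> (\<exists>n. f n = 0)"
proof
  assume "f \<longlonglongrightarrow> 0"
  then show "\<exists>n. f n = 0" by (metis Lim_bounded2 bot_nat_0.extremum_unique ex_has_least_nat)
next
  assume "\<exists>n. f n = 0"
  then obtain n where n: "f n = 0" by blast
  have "f m = 0" if "n \<le> m" for m using that
  proof (induction m)
    case 0 then show ?case using n by simp
  next
    case (Suc m) then show ?case using n absorb by (cases "n = Suc m") auto
  qed
  then have "eventually (\<lambda>m. f m = 0) sequentially" by (auto simp: eventually_sequentially)
  then show "f \<longlonglongrightarrow> 0" by (rule tendsto_eventually)
qed

definition Xi :: "(nat \<Rightarrow> nat \<Rightarrow> 'a \<Rightarrow> nat) \<Rightarrow> (nat \<Rightarrow> nat \<Rightarrow> 'a \<Rightarrow> real) \<Rightarrow>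
    (nat \<Rightarrow> nat \<Rightarrow> 'a \<Rightarrow> real) \<Rightarrow> 'a \<Rightarrow> nat \<Rightarrow> stp" where
  "Xi D X R \<omega> n = (\<lambda>k. real (D n (Suc k) \<omega>), \<lambda>k. X n (Suc k) \<omega>, \<lambda>k. R n (Suc k) \<omega>)"

lemma wf_proc_cwf:
  assumes Xnn: "\<And>n k. 0 \<le> X n k \<omega>" and Rnn: "\<And>n k. 0 \<le> R n k \<omega>"
  shows "wf_proc D X R L n \<omega> = cwf L n (Xi D X R \<omega>)"
proof (induction n)
  case 0 then show ?case by simp
next
  case (Suc n)
  let ?W = "wf_proc D X R L n \<omega>"
  let ?e = "Xi D X R \<omega> n"
  have t: "tD ?W ?e = Dsum D n ?W \<omega>"
    unfolding tD_def Dsum_def Xi_def by (simp add: sum.atLeast1_atMost_eq)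
  have s: "sR ?W ?e = Rsum R n ?W \<omega>"
    unfolding sR_def Rsum_def Xi_def using Rnn by (simp add: sum.atLeast1_atMost_eq max_absorb2)
  have x: "wf_count (Dsum D n ?W \<omega>) (xX ?e) (Rsum R n ?W \<omega>) = wf_count (Dsum D n ?W \<omega>) (\<lambda>k. X n k \<omega>) (Rsum R n ?W \<omega>)"
    by (rule wf_count_cong) (auto simp: xX_def Xi_def Xnn max_absorb2)
  have "wf_proc D X R L (Suc n) \<omega> = wf_count (Dsum D n ?W \<omega>) (\<lambda>k. X n k \<omega>) (Rsum R n ?W \<omega>)" by simp
  also have "\<dots> = gstep ?W ?e" by (simp only: gstep_def t s x)
  also have "\<dots> = cwf L (Suc n) (Xi D X R \<omega>)" using Suc by simp
  finally show ?case .
qed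




lemma indep_pair_law:
  assumes ps: "prob_space M"
    and ind: "prob_space.indep_var M MA U MB V"
    and f: "f \<in> measurable MA S" and g: "g \<in> measurable MB T"
  shows "distr M (S \<Otimes>\<^sub>M T) (\<lambda>\<omega>. (f (U \<omega>), g (V \<omega>))) = distr M S (\<lambda>\<omega>. f (U \<omega>)) \<Otimes>\<^sub>M distr M T (\<lambda>\<omega>. g (V \<omega>))"
proof -
  interpret prob_space M by (rule ps)
  have U: "random_variable MA U" using ind by (rule indep_var_rv1)
  have V: "random_variable MB V" using ind by (rule indep_var_rv2)
  have e: "distr M MA U \<Otimes>\<^sub>M distr M MB V = distr M (MA \<Otimes>\<^sub>M MB) (\<lambda>x. (U x, V x))"
    using ind by (simp add: indep_var_distribution_eq)
  have f': "f \<in> measurable (distr M MA U) S" using f by simp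
  have g': "g \<in> measurable (distr M MB V) T" using g by simp
  have sf: "sigma_finite_measure (distr (distr M MB V) T g)"
    by (intro prob_space_imp_sigma_finite prob_space.prob_space_distr[OF prob_space_distr[OF V] g'])
  have "distr M S (\<lambda>\<omega>. f (U \<omega>)) \<Otimes>\<^sub>M distr M T (\<lambda>\<omega>. g (V \<omega>))
      = distr (distr M MA U) S f \<Otimes>\<^sub>M distr (distr M MB V) T g"
    using U V f g by (simp add: distr_distr comp_def)
  also have "\<dots> = distr (distr M MA U \<Otimes>\<^sub>M distr M MB V) (S \<Otimes>\<^sub>M T) (\<lambda>(x, y). (f x, g y))"
    by (rule pair_measure_distr[OF f' g' sf])
  also have "\<dots> = distr M (S \<Otimes>\<^sub>M T) (\<lambda>\<omega>. (f (U \<omega>), g (V \<omega>)))"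
    unfolding e using U V f g by (subst distr_distr) (auto simp: comp_def)
  finally show ?thesis by simp
qed

theorem mainTheorem3:
  fixes M :: "'a measure"
    and D :: "nat \<Rightarrow> nat \<Rightarrow> 'a \<Rightarrow> nat"
    and X R :: "nat \<Rightarrow> nat \<Rightarrow> 'a \<Rightarrow> real"
    and L :: nat
  assumes ps: "prob_space M"
    and measD: "\<And>n k. D n k \<in> measurable M (count_space UNIV)"
    and measX: "\<And>n k. X n k \<in> borel_measurable M"
    and measR: "\<And>n k. R n k \<in> borel_measurable M"
    \<comment> \<open>the three arrays are mutually independent, each consisting of independent variables\<close>
    and indep: "prob_space.indep_vars M (\<lambda>_. borel) (all_vars D X R) var_index"
    \<comment> \<open>identically distributed within each array\<close>
    and identD: "\<And>n k. 1 \<le> k \<Longrightarrow> distr M (count_space UNIV) (D n k) = distr M (count_space UNIV) (D 0 1)"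
    and identX: "\<And>n k. 1 \<le> k \<Longrightarrow> distr M borel (X n k) = distr M borel (X 0 1)"
    and identR: "\<And>n k. 1 \<le> k \<Longrightarrow> distr M borel (R n k) = distr M borel (R 0 1)"
    \<comment> \<open>nonnegativity of X and R\<close>
    and Xnn: "\<And>n k \<omega>. \<omega> \<in> space M \<Longrightarrow> X n k \<omega> \<ge> 0"
    and Rnn: "\<And>n k \<omega>. \<omega> \<in> space M \<Longrightarrow> R n k \<omega> \<ge> 0"
    \<comment> \<open>X has a continuous distribution function F\<close>
    and Xcont: "\<And>x. measure M {\<omega> \<in> space M. X 0 1 \<omega> = x} = 0"
    \<comment> \<open>(A4) finite variances (hence finite means)\<close>
    and varD: "integrable M (\<lambda>\<omega>. (real (D 0 1 \<omega>))\<^sup>2)"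
    and varX: "integrable M (\<lambda>\<omega>. (X 0 1 \<omega>)\<^sup>2)"
    and varR: "integrable M (\<lambda>\<omega>. (R 0 1 \<omega>)\<^sup>2)"
    \<comment> \<open>(A1) 1 < m < \<infinity>, r < \<infinity>, 0 < \<mu> < \<infinity>\<close>
    and A1m: "integrable M (\<lambda>\<omega>. real (D 0 1 \<omega>)) \<and> 1 < (\<integral>\<omega>. real (D 0 1 \<omega>) \<partial>M)"
    and A1r: "integrable M (R 0 1)"
    and A1mu: "integrable M (X 0 1) \<and> 0 < (\<integral>\<omega>. X 0 1 \<omega> \<partial>M)"
    \<comment> \<open>(A2)\<close>
    and A2a: "measure M {\<omega> \<in> space M. D 0 1 \<omega> = 0} > 0"
    and A2b: "\<exists>k\<ge>2. measure M {\<omega> \<in> space M. D 0 1 \<omega> = k} > 0"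
    \<comment> \<open>(A3) for the wf-process started at 1, every finite positive state is reached w.p.p.\<close>
    and A3: "\<And>j. 1 \<le> j \<Longrightarrow> \<exists>n. measure M {\<omega> \<in> space M. wf_proc D X R 1 n \<omega> = j} > 0"
  shows "measure M {\<omega> \<in> space M. (\<lambda>n. wf_proc D X R L n \<omega>) \<longlonglongrightarrow> 0}
           \<le> (measure M {\<omega> \<in> space M. (\<lambda>n. wf_proc D X R 1 n \<omega>) \<longlonglongrightarrow> 0}) ^ L"
proof -
  interpret PM: prob_space M by (rule ps)
  have mreal: "real \<in> measurable (count_space UNIV) borel" by simp
  have mDr[measurable]: "(\<lambda>\<omega>. real (D n k \<omega>)) \<in> borel_measurable M" for n k
    using measurable_compose[OF measD mreal] by simp
  have mX[measurable]: "X n k \<in> borel_measurable M" for n k by (rule measX)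
  have mR[measurable]: "R n k \<in> borel_measurable M" for n k by (rule measR)
  define \<nu>D where "\<nu>D = distr M borel (\<lambda>\<omega>. real (D 0 1 \<omega>))"
  define \<nu>X where "\<nu>X = distr M borel (X 0 1)"
  define \<nu>R where "\<nu>R = distr M borel (R 0 1)"
  interpret C: canon \<nu>D \<nu>X \<nu>R
  proof (rule canon.intro)
    show "prob_space \<nu>D" unfolding \<nu>D_def by (rule PM.prob_space_distr) (rule mDr)
    show "prob_space \<nu>X" unfolding \<nu>X_def by (rule PM.prob_space_distr) (rule mX)
    show "prob_space \<nu>R" unfolding \<nu>R_def by (rule PM.prob_space_distr) (rule mR)
    show "sets \<nu>D = sets borel" "sets \<nu>X = sets borel" "sets \<nu>R = sets borel"
      unfolding \<nu>D_def \<nu>X_def \<nu>R_def by simp_all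
  qed
  have avD: "all_vars D X R (0, n, k) = (\<lambda>\<omega>. real (D n k \<omega>))" for n k by (simp add: all_vars_def fun_eq_iff)
  have avX: "all_vars D X R (1, n, k) = X n k" for n k by (simp add: all_vars_def fun_eq_iff)
  have avX': "all_vars D X R (Suc 0, n, k) = X n k" for n k by (simp add: all_vars_def fun_eq_iff)
  have avR: "all_vars D X R (2, n, k) = R n k" for n k by (simp add: all_vars_def fun_eq_iff)
  have lawD1: "distr M borel (\<lambda>\<omega>. real (D n k \<omega>)) = \<nu>D" if "1 \<le> k" for n k
  proof -
    have "distr M borel (\<lambda>\<omega>. real (D n k \<omega>)) = distr (distr M (count_space UNIV) (D n k)) borel real"
      by (subst distr_distr) (auto simp: comp_def measD)
    also have "\<dots> = distr (distr M (count_space UNIV) (D 0 1)) borel real" using identD[OF that] by simp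
    also have "\<dots> = \<nu>D" unfolding \<nu>D_def by (subst distr_distr) (auto simp: comp_def measD)
    finally show ?thesis .
  qed
  have lawX1: "distr M borel (X n k) = \<nu>X" if "1 \<le> k" for n k using identX[OF that] \<nu>X_def by simp
  have lawR1: "distr M borel (R n k) = \<nu>R" if "1 \<le> k" for n k using identR[OF that] \<nu>R_def by simp
  have seqD: "distr M SB (\<lambda>\<omega> k. real (D n (Suc k) \<omega>)) = C.SD" for n
  proof -
    have "distr M SB (\<lambda>\<omega> k. all_vars D X R (0, n, Suc k) \<omega>) = C.SD"
      by (rule seq_law[OF ps indep]) (auto simp: inj_def var_index_def avD lawD1)
    then show ?thesis by (simp add: avD)
  qed
  have seqX: "distr M SB (\<lambda>\<omega> k. X n (Suc k) \<omega>) = C.SX" for n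
  proof -
    have "distr M SB (\<lambda>\<omega> k. all_vars D X R (1, n, Suc k) \<omega>) = C.SX"
      by (rule seq_law[OF ps indep]) (auto simp: inj_def var_index_def avX avX' lawX1)
    then show ?thesis by (simp add: avX')
  qed
  have seqR: "distr M SB (\<lambda>\<omega> k. R n (Suc k) \<omega>) = C.SR" for n
  proof -
    have "distr M SB (\<lambda>\<omega> k. all_vars D X R (2, n, Suc k) \<omega>) = C.SR"
      by (rule seq_law[OF ps indep]) (auto simp: inj_def var_index_def avR lawR1)
    then show ?thesis by (simp add: avR)
  qed
  have lawQ: "distr M C.Q (\<lambda>\<omega>. Xi D X R \<omega> n) = C.Q" for n
  proof -
    let ?A = "{(0::nat, n, k) | k. 1 \<le> k}"
    let ?B = "{(c, n, k) | c k. (c = 1 \<or> c = 2) \<and> 1 \<le> k}"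
    let ?A' = "{(1::nat, n, k) | k. 1 \<le> k}"
    let ?B' = "{(2::nat, n, k) | k. 1 \<le> k}"
    have i: "PM.indep_var (PiM ?A (\<lambda>_. borel)) (\<lambda>\<omega>. restrict (\<lambda>i. all_vars D X R i \<omega>) ?A)
        (PiM ?B (\<lambda>_. borel)) (\<lambda>\<omega>. restrict (\<lambda>i. all_vars D X R i \<omega>) ?B)"
      by (rule PM.indep_var_restrict[OF indep]) (auto simp: var_index_def)
    have i': "PM.indep_var (PiM ?A' (\<lambda>_. borel)) (\<lambda>\<omega>. restrict (\<lambda>i. all_vars D X R i \<omega>) ?A')
        (PiM ?B' (\<lambda>_. borel)) (\<lambda>\<omega>. restrict (\<lambda>i. all_vars D X R i \<omega>) ?B')"
      by (rule PM.indep_var_restrict[OF indep]) (auto simp: var_index_def)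
    have m1: "(\<lambda>y k. y (0, n, Suc k)) \<in> measurable (PiM ?A (\<lambda>_. borel)) SB"
      by (rule measurable_PiM_single') (auto intro!: measurable_component_singleton simp: space_PiM)
    have m2: "(\<lambda>y k. y (1, n, Suc k)) \<in> measurable (PiM ?B (\<lambda>_. borel)) SB"
      by (rule measurable_PiM_single') (auto intro!: measurable_component_singleton simp: space_PiM)
    have m3: "(\<lambda>y k. y (2, n, Suc k)) \<in> measurable (PiM ?B (\<lambda>_. borel)) SB"
      by (rule measurable_PiM_single') (auto intro!: measurable_component_singleton simp: space_PiM)
    have m23: "(\<lambda>y. (\<lambda>k. y (1, n, Suc k), \<lambda>k. y (2, n, Suc k))) \<in> measurable (PiM ?B (\<lambda>_. borel)) (SB \<Otimes>\<^sub>M SB)"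
      using m2 m3 by (rule measurable_Pair)
    have m2': "(\<lambda>y k. y (1, n, Suc k)) \<in> measurable (PiM ?A' (\<lambda>_. borel)) SB"
      by (rule measurable_PiM_single') (auto intro!: measurable_component_singleton simp: space_PiM)
    have m3': "(\<lambda>y k. y (2, n, Suc k)) \<in> measurable (PiM ?B' (\<lambda>_. borel)) SB"
      by (rule measurable_PiM_single') (auto intro!: measurable_component_singleton simp: space_PiM)
    have eD: "(\<lambda>\<omega>. (\<lambda>y k. y (0, n, Suc k)) (restrict (\<lambda>i. all_vars D X R i \<omega>) ?A)) = (\<lambda>\<omega> k. real (D n (Suc k) \<omega>))"
      by (simp add: fun_eq_iff all_vars_def)
    have eXR: "(\<lambda>\<omega>. (\<lambda>y. (\<lambda>k. y (1, n, Suc k), \<lambda>k. y (2, n, Suc k))) (restrict (\<lambda>i. all_vars D X R i \<omega>) ?B))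
       = (\<lambda>\<omega>. (\<lambda>k. X n (Suc k) \<omega>, \<lambda>k. R n (Suc k) \<omega>))"
      by (simp add: fun_eq_iff all_vars_def)
    have eX: "(\<lambda>\<omega>. (\<lambda>y k. y (1, n, Suc k)) (restrict (\<lambda>i. all_vars D X R i \<omega>) ?A')) = (\<lambda>\<omega> k. X n (Suc k) \<omega>)"
      by (simp add: fun_eq_iff all_vars_def)
    have eR: "(\<lambda>\<omega>. (\<lambda>y k. y (2, n, Suc k)) (restrict (\<lambda>i. all_vars D X R i \<omega>) ?B')) = (\<lambda>\<omega> k. R n (Suc k) \<omega>)"
      by (simp add: fun_eq_iff all_vars_def)
    have xr: "distr M (SB \<Otimes>\<^sub>M SB) (\<lambda>\<omega>. (\<lambda>k. X n (Suc k) \<omega>, \<lambda>k. R n (Suc k) \<omega>)) = C.SX \<Otimes>\<^sub>M C.SR"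
      using indep_pair_law[OF ps i' m2' m3'] seqX[of n] seqR[of n] by (simp add: all_vars_def)
    have "distr M EB (\<lambda>\<omega>. ((\<lambda>k. real (D n (Suc k) \<omega>)), (\<lambda>k. X n (Suc k) \<omega>, \<lambda>k. R n (Suc k) \<omega>))) = C.Q"
      using indep_pair_law[OF ps i m1 m23] seqD[of n] xr by (simp add: all_vars_def)
    then have "distr M EB (\<lambda>\<omega>. Xi D X R \<omega> n) = C.Q"
      by (simp add: Xi_def)
    moreover have "distr M C.Q (\<lambda>\<omega>. Xi D X R \<omega> n) = distr M EB (\<lambda>\<omega>. Xi D X R \<omega> n)"
      by (rule distr_cong) (simp_all add: C.sets_Q)
    ultimately show ?thesis by simp
  qed
  have rvXi: "PM.random_variable C.Q (\<lambda>\<omega>. Xi D X R \<omega> n)" for n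
  proof -
    have "(\<lambda>\<omega>. Xi D X R \<omega> n) \<in> measurable M EB"
      unfolding Xi_def by (intro measurable_Pair measurable_abs_UNIV) simp_all
    then show ?thesis by (simp add: measurable_cong_sets[OF refl C.sets_Q])
  qed
  have iT: "PM.indep_vars (\<lambda>_. C.Q) (\<lambda>n \<omega>. Xi D X R \<omega> n) UNIV"
  proof -
    let ?K = "\<lambda>n. {(c::nat, n', k) | c n' k. n' = n \<and> c \<le> 2 \<and> 1 \<le> k}"
    have i: "PM.indep_vars (\<lambda>n. PiM (?K n) (\<lambda>_. borel)) (\<lambda>n \<omega>. restrict (\<lambda>i. all_vars D X R i \<omega>) (?K n)) UNIV"
      by (rule PM.indep_vars_restrict[OF indep]) (auto simp: var_index_def disjoint_family_on_def)
    have mrho: "(\<lambda>y. (\<lambda>k. y (0, n, Suc k), \<lambda>k. y (1, n, Suc k), \<lambda>k. y (2, n, Suc k))) \<in> measurable (PiM (?K n) (\<lambda>_. borel)) C.Q" for n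
    proof -
      have m: "(\<lambda>y k. y (c, n, Suc k)) \<in> measurable (PiM (?K n) (\<lambda>_. borel)) SB" if "c \<le> 2" for c :: nat
        using that by (intro measurable_PiM_single') (auto intro!: measurable_component_singleton simp: space_PiM)
      have "(\<lambda>y. (\<lambda>k. y (0, n, Suc k), \<lambda>k. y (1, n, Suc k), \<lambda>k. y (2, n, Suc k))) \<in> measurable (PiM (?K n) (\<lambda>_. borel)) EB"
        by (intro measurable_Pair m) simp_all
      then show ?thesis by (simp add: measurable_cong_sets[OF refl C.sets_Q])
    qed
    have "PM.indep_vars (\<lambda>_. C.Q) (\<lambda>n \<omega>. (\<lambda>y. (\<lambda>k. y (0, n, Suc k), \<lambda>k. y (1, n, Suc k), \<lambda>k. y (2, n, Suc k))) (restrict (\<lambda>i. all_vars D X R i \<omega>) (?K n))) UNIV"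
      by (rule PM.indep_vars_compose2[OF i mrho])
    moreover have "(\<lambda>n \<omega>. (\<lambda>y. (\<lambda>k. y (0, n, Suc k), \<lambda>k. y (1, n, Suc k), \<lambda>k. y (2, n, Suc k))) (restrict (\<lambda>i. all_vars D X R i \<omega>) (?K n)))
        = (\<lambda>n \<omega>. Xi D X R \<omega> n)"
      by (simp add: fun_eq_iff Xi_def all_vars_def)
    ultimately show ?thesis by simp
  qed
  have lawP: "distr M C.P (Xi D X R) = C.P"
  proof -
    have "distr M C.P (\<lambda>x. \<lambda>n\<in>UNIV. Xi D X R x n) = PiM UNIV (\<lambda>n. distr M C.Q (\<lambda>\<omega>. Xi D X R \<omega> n))"
      using PM.indep_vars_iff_distr_eq_PiM'[where I=UNIV and M'="\<lambda>_. C.Q" and X="\<lambda>n \<omega>. Xi D X R \<omega> n"] iT rvXi by simp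
    then show ?thesis by (simp add: lawQ restrict_UNIV)
  qed
  have mXi: "Xi D X R \<in> measurable M C.P"
  proof -
    have "(\<lambda>\<omega> n. Xi D X R \<omega> n) \<in> measurable M C.P" by (rule measurable_abs_UNIV) (rule rvXi)
    then show ?thesis by simp
  qed
  have ExtS: "C.Ext L' \<in> sets C.P" for L'
  proof -
    have "C.Ext L' = (\<Union>n. {\<omega>. cwf L' n \<omega> = 0})" unfolding C.Ext_def by auto
    then show ?thesis by auto
  qed
  have setEq: "{\<omega> \<in> space M. (\<lambda>n. wf_proc D X R L' n \<omega>) \<longlonglongrightarrow> 0} = Xi D X R -` C.Ext L' \<inter> space M" for L'
  proof -
    have "(\<lambda>n. wf_proc D X R L' n \<omega>) \<longlonglongrightarrow> 0 \<longleftrightarrow> (\<exists>n. wf_proc D X R L' n \<omega> = 0)" for \<omega>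
      by (rule nat_tendsto0_iff) (simp add: Dsum_def)
    moreover have "wf_proc D X R L' n \<omega> = cwf L' n (Xi D X R \<omega>)" if "\<omega> \<in> space M" for n \<omega>
      by (rule wf_proc_cwf) (use Xnn Rnn that in auto)
    ultimately show ?thesis unfolding C.Ext_def by auto
  qed
  have meq: "measure M {\<omega> \<in> space M. (\<lambda>n. wf_proc D X R L' n \<omega>) \<longlonglongrightarrow> 0} = measure C.P (C.Ext L')" for L'
  proof -
    have "measure M {\<omega> \<in> space M. (\<lambda>n. wf_proc D X R L' n \<omega>) \<longlonglongrightarrow> 0} = measure (distr M C.P (Xi D X R)) (C.Ext L')"
      unfolding setEq by (rule measure_distr[OF mXi ExtS, symmetric])
    then show ?thesis by (simp add: lawP)
  qed
  interpret PP: prob_space C.P by (intro prob_space_PiM C.prob_Q)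
  have "ennreal (measure C.P (C.Ext L)) \<le> ennreal (measure C.P (C.Ext 1)) ^ L"
    using C.Ext_bound[of L] by (simp add: PP.emeasure_eq_measure)
  then have "ennreal (measure C.P (C.Ext L)) \<le> ennreal (measure C.P (C.Ext 1) ^ L)"
    by (simp add: ennreal_power)
  then have "measure C.P (C.Ext L) \<le> measure C.P (C.Ext 1) ^ L"
    by (simp add: ennreal_le_iff)
  then show ?thesis by (simp add: meq)
qed



end
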